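(* A choice probability function $q_1:[0,\infty)\to[0,1]$ (depending only on the price $p_1$ of good 1) is QRUM-rationalizable if and only if: (A) $q_1$ is non-increasing; (B) $q_1$ is continuous; and (C) there exist prices $p_L$ and $p_H$ such that $\lim_{p_1\searrow p_L}q_1(p_1)=1$ and $\lim_{p_1\nearrow p_H}q_1(p_1)=0$.
   Context: Two goods: good 0 with price $0$ and good 1 with price $p_1\ge 0$; consumers have common income $y$ (large relative to prices) and spend the remainder on a numeraire. $q_1(p_1)$ is the population probability of choosing good 1. Definition (quasi-linear random utility model, QRUM): $q_1$ is QRUM-rationalizable if there exist a random variable $\eta$ with distribution $H$ and functions $V_0(\eta),V_1(\eta)$ and $\beta(\eta)>0$ (giving utilities $U_0(y,\eta)=V_0(\eta)+\beta(\eta)y$ and $U_1(y-p_1,\eta)=V_1(\eta)+\beta(\eta)(y-p_1)$) such that for all $p_1$, $q_1(p_1)=\int\mathbb{1}\{V_0(\eta)\le V_1(\eta)-\beta(\eta)p_1\}\,dH(\eta)$, and (i) for every $p_1$, $\int\mathbb{1}\{V_0(\eta)=V_1(\eta)-\beta(\eta)p_1\}\,dH(\eta)=0$; (ii) there exist a low price $p_L$ with $\lim_{p_1\searrow p_L}\Pr[V_0(\eta)\le V_1(\eta)-\beta(\eta)p_1]=1$ and a high price $p_H$ with $\lim_{p_1\nearrow p_H}\Pr[V_0(\eta)\le V_1(\eta)-\beta(\eta)p_1]=0$. *)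

theory Defs
  imports "HOL-Probability.Probability"
begin

text \<open>The taste shock eta is a real-valued
random variable with distribution H (a probability measure on the Borel sets of the reals).
Prices of good 1 range over [0, infinity); the numeraire income y cancels from the comparison
V0 + beta*y <= V1 + beta*(y - p1), so the choice event is written directly as
V0 eta <= V1 eta - beta eta * p1.\<close>

definition qrum_prob :: "real measure \<Rightarrow> (real \<Rightarrow> real) \<Rightarrow> (real \<Rightarrow> real) \<Rightarrow> (real \<Rightarrow> real) \<Rightarrow> real \<Rightarrow> real" where
  "qrum_prob H V0 V1 \<beta> p = measure H {\<eta>. V0 \<eta> \<le> V1 \<eta> - \<beta> \<eta> * p}"

definition QRUM_rationalizable :: "(real \<Rightarrow> real) \<Rightarrow> bool" where
  "QRUM_rationalizable q1 \<longleftrightarrow>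
     (\<exists>(H :: real measure) V0 V1 \<beta>.
        prob_space H \<and> sets H = sets borel \<and>
        V0 \<in> borel_measurable borel \<and> V1 \<in> borel_measurable borel \<and> \<beta> \<in> borel_measurable borel \<and>
        (\<forall>\<eta>. \<beta> \<eta> > 0) \<and>
        (\<forall>p \<ge> 0. q1 p = qrum_prob H V0 V1 \<beta> p) \<and>
        (\<forall>p \<ge> 0. measure H {\<eta>. V0 \<eta> = V1 \<eta> - \<beta> \<eta> * p} = 0) \<and>
        (\<exists>pL pH. 0 \<le> pL \<and> 0 < pH \<and>
           (qrum_prob H V0 V1 \<beta> \<longlongrightarrow> 1) (at_right pL) \<and>
           (qrum_prob H V0 V1 \<beta> \<longlongrightarrow> 0) (at_left pH)))"

end

theory Submission
  imports Defs
begin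

lemma rd_Ici:
  assumes "real_distribution M"
  shows "measure M {p..} = 1 - cdf M p + measure M {p}"
proof -
  interpret real_distribution M by fact
  have d: "{p..} = {p} \<union> {p<..}" by auto
  have "measure M {p..} = measure M {p} + measure M {p<..}"
    unfolding d by (rule finite_measure_Union) auto
  moreover have "{p<..} = space M - {..p}" by auto
  then have "measure M {p<..} = 1 - cdf M p"
    using prob_compl[of "{..p}"] by (simp add: cdf_def)
  ultimately show ?thesis by simp
qed

lemma forward:
  fixes q1 :: "real \<Rightarrow> real"
  assumes "QRUM_rationalizable q1"
  shows "((\<forall>x y. 0 \<le> x \<and> x \<le> y \<longrightarrow> q1 y \<le> q1 x) \<and>
            continuous_on {0..} q1 \<and>
            (\<exists>pL pH. 0 \<le> pL \<and> 0 < pH \<and>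
               (q1 \<longlongrightarrow> 1) (at_right pL) \<and> (q1 \<longlongrightarrow> 0) (at_left pH)))"
proof -
  obtain H V0 V1 \<beta> where P: "prob_space H" and sH: "sets H = sets borel"
    and m0: "V0 \<in> borel_measurable borel" and m1: "V1 \<in> borel_measurable borel"
    and mb: "\<beta> \<in> borel_measurable borel" and bpos: "\<forall>\<eta>. \<beta> \<eta> > 0"
    and q: "\<forall>p \<ge> 0. q1 p = qrum_prob H V0 V1 \<beta> p"
    and at: "\<forall>p \<ge> 0. measure H {\<eta>. V0 \<eta> = V1 \<eta> - \<beta> \<eta> * p} = 0"
    and lim: "\<exists>pL pH. 0 \<le> pL \<and> 0 < pH \<and>
           (qrum_prob H V0 V1 \<beta> \<longlongrightarrow> 1) (at_right pL) \<and>
           (qrum_prob H V0 V1 \<beta> \<longlongrightarrow> 0) (at_left pH)"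
    using assms unfolding QRUM_rationalizable_def by blast
  interpret prob_space H by (rule P)
  define X where "X = (\<lambda>\<eta>. (V1 \<eta> - V0 \<eta>) / \<beta> \<eta>)"
  have spH: "space H = UNIV" using sets_eq_imp_space_eq[OF sH] by simp
  have mX: "X \<in> borel_measurable borel" unfolding X_def using m0 m1 mb by measurable
  have mXH: "random_variable borel X" using mX measurable_cong_sets[OF sH refl] by blast
  define M where "M = distr H borel X"
  have rd: "real_distribution M" unfolding M_def using mXH by simp
  interpret M: real_distribution M by (rule rd)
  have mM: "measure M A = measure H (X -` A)" if "A \<in> sets borel" for A
    unfolding M_def using measure_distr[OF mXH that] spH by simp
  have e1: "{\<eta>. V0 \<eta> \<le> V1 \<eta> - \<beta> \<eta> * p} = X -` {p..}" for p
  proof -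
    have "V0 \<eta> \<le> V1 \<eta> - \<beta> \<eta> * p \<longleftrightarrow> p \<le> X \<eta>" for \<eta>
      using bpos[rule_format, of \<eta>] unfolding X_def by (simp add: field_simps)
    then show ?thesis by auto
  qed
  have e2: "{\<eta>. V0 \<eta> = V1 \<eta> - \<beta> \<eta> * p} = X -` {p}" for p
  proof -
    have "V0 \<eta> = V1 \<eta> - \<beta> \<eta> * p \<longleftrightarrow> p = X \<eta>" for \<eta>
      using bpos[rule_format, of \<eta>] unfolding X_def by (auto simp: field_simps)
    then show ?thesis by auto
  qed
  have qp: "qrum_prob H V0 V1 \<beta> p = measure M {p..}" for p
    unfolding qrum_prob_def e1 by (simp add: mM)
  have atom: "measure M {p} = 0" if "p \<ge> 0" for p
    using at[rule_format, OF that] unfolding e2 by (simp add: mM)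
  have qc: "q1 p = 1 - cdf M p" if "p \<ge> 0" for p
    using q[rule_format, OF that] qp[of p] rd_Ici[OF rd, of p] atom[OF that] by simp
  have A: "\<forall>x y. 0 \<le> x \<and> x \<le> y \<longrightarrow> q1 y \<le> q1 x"
    using qc M.cdf_nondecreasing by force
  have "continuous_on {0..} (\<lambda>p. 1 - cdf M p)"
  proof (intro continuous_at_imp_continuous_on ballI)
    fix p :: real assume "p \<in> {0..}"
    then have "isCont (cdf M) p" using M.isCont_cdf atom by simp
    then show "isCont (\<lambda>p. 1 - cdf M p) p" by (intro continuous_intros)
  qed
  then have B: "continuous_on {0..} q1"
    by (rule continuous_on_cong[THEN iffD1, rotated 2]) (auto simp: qc)
  obtain pL pH where pLH: "0 \<le> pL" "0 < pH"
    and l1: "(qrum_prob H V0 V1 \<beta> \<longlongrightarrow> 1) (at_right pL)"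
    and l2: "(qrum_prob H V0 V1 \<beta> \<longlongrightarrow> 0) (at_left pH)" using lim by blast
  have "(q1 \<longlongrightarrow> 1) (at_right pL)"
  proof (rule tendsto_cong[THEN iffD1, OF _ l1])
    show "\<forall>\<^sub>F x in at_right pL. qrum_prob H V0 V1 \<beta> x = q1 x"
      using eventually_at_right_less[of pL] by eventually_elim (use q pLH in auto)
  qed
  moreover have "(q1 \<longlongrightarrow> 0) (at_left pH)"
  proof (rule tendsto_cong[THEN iffD1, OF _ l2])
    show "\<forall>\<^sub>F x in at_left pH. qrum_prob H V0 V1 \<beta> x = q1 x"
      using eventually_at_left_real[OF pLH(2)] by eventually_elim (use q in auto)
  qed
  ultimately show ?thesis using A B pLH by blast
qed

lemma backward:
  fixes q1 :: "real \<Rightarrow> real"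
  assumes range: "\<forall>p \<ge> 0. 0 \<le> q1 p \<and> q1 p \<le> 1"
    and A: "\<forall>x y. 0 \<le> x \<and> x \<le> y \<longrightarrow> q1 y \<le> q1 x"
    and B: "continuous_on {0..} q1"
    and pLH: "0 \<le> pL" "0 < pH"
    and l1: "(q1 \<longlongrightarrow> 1) (at_right pL)" and l2: "(q1 \<longlongrightarrow> 0) (at_left pH)"
  shows "QRUM_rationalizable q1"
proof -
  have one: "q1 x = 1" if "0 \<le> x" "x \<le> pL" for x
  proof -
    have "1 \<le> q1 x"
    proof (rule tendsto_upperbound[OF l1])
      show "\<forall>\<^sub>F y in at_right pL. q1 y \<le> q1 x"
        using eventually_at_right_less[of pL] by eventually_elim (use A that in auto)
    qed simp
    then show ?thesis using range that by force
  qed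
  have zero: "q1 x = 0" if "pH \<le> x" for x
  proof -
    have "q1 x \<le> 0"
    proof (rule tendsto_lowerbound[OF l2])
      show "\<forall>\<^sub>F y in at_left pH. q1 x \<le> q1 y"
        using eventually_at_left_real[OF pLH(2)] by eventually_elim (use A that in auto)
    qed simp
    moreover have "0 \<le> q1 x" using range that pLH by simp
    ultimately show ?thesis by linarith
  qed
  define G where "G = (\<lambda>x. q1 (max x 0))"
  define F where "F = (\<lambda>x. 1 - G x)"
  have cG: "continuous_on UNIV G"
    unfolding G_def
    by (rule continuous_on_compose2[OF B]) (auto intro!: continuous_intros)
  have iG: "isCont G x" for x using cG by (simp add: continuous_on_eq_continuous_at)
  have iF: "isCont F x" for x unfolding F_def using iG by (intro continuous_intros)
  have monoF: "F x \<le> F y" if "x \<le> y" for x y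
    unfolding F_def G_def using A that by (auto simp: max_def)
  have rcF: "continuous (at_right a) F" for a
    using iF continuous_at_split by blast
  have botF: "(F \<longlongrightarrow> 0) at_bot"
  proof (rule tendsto_eventually)
    show "\<forall>\<^sub>F x in at_bot. F x = 0"
      unfolding eventually_at_bot_linorder
      by (rule exI[of _ 0]) (auto simp: F_def G_def one pLH max_def)
  qed
  have topF: "(F \<longlongrightarrow> 1) at_top"
  proof (rule tendsto_eventually)
    show "\<forall>\<^sub>F x in at_top. F x = 1"
      unfolding eventually_at_top_linorder
      by (rule exI[of _ pH]) (use pLH in \<open>auto simp: F_def G_def zero max_def\<close>)
  qed
  define M where "M = interval_measure F"
  have rd: "real_distribution M" unfolding M_def
    by (rule real_distribution_interval_measure[OF monoF rcF botF topF])
  interpret real_distribution M by (rule rd)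
  have cdfM: "cdf M = F" unfolding M_def
    by (rule cdf_interval_measure[OF monoF rcF botF])
  have atom: "measure M {p} = 0" for p
    using isCont_cdf[of p] iF cdfM by simp
  have qp: "qrum_prob M (\<lambda>_. 0) (\<lambda>\<eta>. \<eta>) (\<lambda>_. 1) p = G p" for p
  proof -
    have "{\<eta>::real. 0 \<le> \<eta> - 1 * p} = {p..}" by auto
    then show ?thesis unfolding qrum_prob_def
      using rd_Ici[OF rd, of p] atom[of p] cdfM by (simp add: F_def)
  qed
  have atom2: "measure M {\<eta>. (0::real) = \<eta> - 1 * p} = 0" for p
  proof -
    have "{\<eta>::real. 0 = \<eta> - 1 * p} = {p}" by auto
    then show ?thesis using atom by simp
  qed
  have sM: "sets M = sets borel" by simp
  have lim1: "(qrum_prob M (\<lambda>_. 0) (\<lambda>\<eta>. \<eta>) (\<lambda>_. 1) \<longlongrightarrow> 1) (at_right pL)"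
  proof -
    have "(G \<longlongrightarrow> G pL) (at_right pL)"
      using iG[of pL] by (simp add: isCont_def filterlim_at_split)
    moreover have "G pL = 1" unfolding G_def using one pLH by (simp add: max_def)
    ultimately show ?thesis by (simp add: qp[abs_def] G_def[symmetric])
  qed
  have lim2: "(qrum_prob M (\<lambda>_. 0) (\<lambda>\<eta>. \<eta>) (\<lambda>_. 1) \<longlongrightarrow> 0) (at_left pH)"
  proof -
    have "(G \<longlongrightarrow> G pH) (at_left pH)"
      using iG[of pH] by (simp add: isCont_def filterlim_at_split)
    moreover have "G pH = 0" unfolding G_def using zero pLH by (simp add: max_def)
    ultimately show ?thesis by (simp add: qp[abs_def] G_def[symmetric])
  qed
  have qq: "\<forall>p \<ge> 0. q1 p = qrum_prob M (\<lambda>_. 0) (\<lambda>\<eta>. \<eta>) (\<lambda>_. 1) p"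
    using qp by (simp add: G_def max_def)
  show ?thesis unfolding QRUM_rationalizable_def
    apply (rule exI[of _ M], rule exI[of _ "\<lambda>_. 0"], rule exI[of _ "\<lambda>\<eta>. \<eta>"], rule exI[of _ "\<lambda>_. 1"])
    using prob_space_axioms sM qq atom2 lim1 lim2 pLH by auto
qed

theorem corollary1:
  fixes q1 :: "real \<Rightarrow> real"
  assumes range: "\<forall>p \<ge> 0. 0 \<le> q1 p \<and> q1 p \<le> 1"
  shows "QRUM_rationalizable q1 \<longleftrightarrow>
           ((\<forall>x y. 0 \<le> x \<and> x \<le> y \<longrightarrow> q1 y \<le> q1 x) \<and>
            continuous_on {0..} q1 \<and>
            (\<exists>pL pH. 0 \<le> pL \<and> 0 < pH \<and>
               (q1 \<longlongrightarrow> 1) (at_right pL) \<and> (q1 \<longlongrightarrow> 0) (at_left pH)))"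
proof
  assume "QRUM_rationalizable q1"
  then show "((\<forall>x y. 0 \<le> x \<and> x \<le> y \<longrightarrow> q1 y \<le> q1 x) \<and>
            continuous_on {0..} q1 \<and>
            (\<exists>pL pH. 0 \<le> pL \<and> 0 < pH \<and>
               (q1 \<longlongrightarrow> 1) (at_right pL) \<and> (q1 \<longlongrightarrow> 0) (at_left pH)))"
    by (rule forward)
next
  assume "((\<forall>x y. 0 \<le> x \<and> x \<le> y \<longrightarrow> q1 y \<le> q1 x) \<and>
            continuous_on {0..} q1 \<and>
            (\<exists>pL pH. 0 \<le> pL \<and> 0 < pH \<and>
               (q1 \<longlongrightarrow> 1) (at_right pL) \<and> (q1 \<longlongrightarrow> 0) (at_left pH)))"
  then show "QRUM_rationalizable q1" using backward[OF range] by blast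
qed

end
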